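(* There exist an open interval $A\subset\mathbb R$ of length strictly larger than $2$ and a smooth ($C^\infty$) function $\psi:A\to\mathbb C$ which is a regular $\mathbb C$-supershift on $A$ but is not real analytic on $A$.
   Context: For an open interval $A\subset\mathbb R$ of length $R>2$ (possibly infinite), set $\mathbb A=\{(a,a')\in\mathbb R\times A:\ a'+[-1,1]\subset A,\ a+a'\in A\}$. For a sequence $\boldsymbol\epsilon=(\epsilon_N)_{N\ge1}$ with $\epsilon_N\in[0,1)$ and $\epsilon_N\to0$, put $h^{\boldsymbol\epsilon}_{N,\nu}=1-2\,\frac{\nu+\epsilon_N(N-\nu)}{N}$ for $0\le\nu\le N$. For a continuous $\psi:A\to\mathbb C$ and $(a,a')\in\mathbb A$ set $$S_N^{\boldsymbol\epsilon}[\psi](a,a')=\sum_{\nu=0}^N\binom N\nu\Big(\frac{1+a}2\Big)^{N-\nu}\Big(\frac{1-a}2\Big)^{\nu}\psi\big(a'+h^{\boldsymbol\epsilon}_{N,\nu}\big).$$ A continuous $\psi:A\to\mathbb C$ is called a regular $\mathbb C$-supershift on $A$ if (1) for every such sequence $\boldsymbol\epsilon$, $S_N^{\boldsymbol\epsilon}[\psi](a,a')\to\psi(a+a')$ as $N\to\infty$ uniformly on compact subsets of $\mathbb A$; and (2) for every family $\{\boldsymbol\epsilon_{\iota'}=(\epsilon_{\iota',N})_{N\ge1}:\iota'\in I'\}$ of such sequences with $\sup_{\iota'\in I'}\epsilon_{\iota',N}\to0$ as $N\to\infty$, the convergence in (1) is uniform with respect to $\iota'\in I'$ on each compact subset of $\mathbb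 A$. *)

theory Defs
  imports "HOL-Analysis.Analysis"
begin

definition open_interval_gt2 :: "real set \<Rightarrow> bool" where
  "open_interval_gt2 A \<longleftrightarrow> open A \<and> is_interval A \<and> (\<exists>x\<in>A. \<exists>y\<in>A. y - x > 2)"

definition adm_pairs :: "real set \<Rightarrow> (real \<times> real) set" where
  "adm_pairs A = {(a, a'). a' \<in> A \<and> {a' - 1 .. a' + 1} \<subseteq> A \<and> a + a' \<in> A}"

text \<open>Admissible sequences epsilon (index 0 is irrelevant, only N \<ge> 1 is used).\<close>
definition adm_eps :: "(nat \<Rightarrow> real) \<Rightarrow> bool" where
  "adm_eps e \<longleftrightarrow> (\<forall>N. 0 \<le> e N \<and> e N < 1) \<and> e \<longlonglongrightarrow> 0"

definition h_eps :: "(nat \<Rightarrow> real) \<Rightarrow> nat \<Rightarrow> nat \<Rightarrow> real" where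
  "h_eps e N \<nu> = 1 - 2 * ((real \<nu> + e N * (real N - real \<nu>)) / real N)"

definition S_eps :: "(nat \<Rightarrow> real) \<Rightarrow> (real \<Rightarrow> complex) \<Rightarrow> nat \<Rightarrow> real \<Rightarrow> real \<Rightarrow> complex" where
  "S_eps e \<psi> N a a' =
     (\<Sum>\<nu>=0..N. of_real (real (N choose \<nu>) * ((1 + a) / 2) ^ (N - \<nu>) * ((1 - a) / 2) ^ \<nu>)
                 * \<psi> (a' + h_eps e N \<nu>))"

definition regular_supershift :: "real set \<Rightarrow> (real \<Rightarrow> complex) \<Rightarrow> bool" where
  "regular_supershift A \<psi> \<longleftrightarrow>
     continuous_on A \<psi> \<and>
     (\<forall>e. adm_eps e \<longrightarrow>
        (\<forall>K. compact K \<and> K \<subseteq> adm_pairs A \<longrightarrow>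
           uniform_limit K (\<lambda>N (a, a'). S_eps e \<psi> N a a') (\<lambda>(a, a'). \<psi> (a + a')) sequentially)) \<and>
     (\<forall>F :: (nat \<Rightarrow> real) set.
        (\<forall>e\<in>F. adm_eps e) \<and> (\<forall>\<delta>>0. \<forall>\<^sub>F N in sequentially. \<forall>e\<in>F. e N \<le> \<delta>) \<longrightarrow>
        (\<forall>K. compact K \<and> K \<subseteq> adm_pairs A \<longrightarrow>
           (\<forall>\<delta>>0. \<forall>\<^sub>F N in sequentially. \<forall>e\<in>F. \<forall>(a, a')\<in>K.
               norm (S_eps e \<psi> N a a' - \<psi> (a + a')) < \<delta>)))"

definition smooth_on_real :: "real set \<Rightarrow> (real \<Rightarrow> complex) \<Rightarrow> bool" where
  "smooth_on_real A \<psi> \<longleftrightarrow>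
     (\<exists>D :: nat \<Rightarrow> real \<Rightarrow> complex. (\<forall>x\<in>A. D 0 x = \<psi> x) \<and>
        (\<forall>n. \<forall>x\<in>A. (D n has_vector_derivative D (Suc n) x) (at x)))"

definition real_analytic_on :: "real set \<Rightarrow> (real \<Rightarrow> complex) \<Rightarrow> bool" where
  "real_analytic_on A \<psi> \<longleftrightarrow>
     (\<forall>x0\<in>A. \<exists>r>0. \<exists>c :: nat \<Rightarrow> complex. \<forall>x. \<bar>x - x0\<bar> < r \<longrightarrow>
        x \<in> A \<and> (\<lambda>n. c n * of_real ((x - x0) ^ n)) sums \<psi> x)"

end

theory Submission
  imports Defs "HOL-Computational_Algebra.Polynomial" "HOL-Complex_Analysis.Complex_Analysis"
begin

lemma poly_exp_lim: "((\<lambda>y. poly Q y * exp (-y)) \<longlongrightarrow> (0::real)) at_top"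
proof -
  have "((\<lambda>y. \<Sum>i\<le>degree Q. coeff Q i * (y ^ i / exp y)) \<longlongrightarrow> 0) at_top"
    by (intro tendsto_null_sum tendsto_mult_right_zero tendsto_power_div_exp_0)
  moreover have "\<And>y. (\<Sum>i\<le>degree Q. coeff Q i * (y ^ i / exp y)) = poly Q y * exp (-y)"
  proof -
    fix y :: real
    have "(\<Sum>i\<le>degree Q. coeff Q i * (y ^ i / exp y)) = (\<Sum>i\<le>degree Q. coeff Q i * y ^ i) / exp y"
      by (simp add: sum_divide_distrib)
    then show "(\<Sum>i\<le>degree Q. coeff Q i * (y ^ i / exp y)) = poly Q y * exp (-y)"
      by (simp add: poly_altdef exp_minus divide_inverse)
  qed
  ultimately show ?thesis by simp
qed

fun Pn :: "nat \<Rightarrow> real poly" where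
  "Pn 0 = 1"
| "Pn (Suc n) = [:0,0,1:] * (Pn n - pderiv (Pn n))"

definition Dflat :: "nat \<Rightarrow> real \<Rightarrow> real" where
  "Dflat n x = (if x > 0 then poly (Pn n) (1/x) * exp (-1/x) else 0)"

lemma Dflat_pos_deriv:
  assumes "x > 0"
  shows "((\<lambda>x. poly (Pn n) (1/x) * exp (-1/x)) has_real_derivative
           poly (Pn (Suc n)) (1/x) * exp (-1/x)) (at x)"
proof -
  have "((\<lambda>x. poly (Pn n) (1/x) * exp (-1/x)) has_real_derivative
          (poly (pderiv (Pn n)) (1/x) * (- 1 / x^2)) * exp (-1/x) + poly (Pn n) (1/x) * (exp (-1/x) * (1 / x^2))) (at x)"
    using assms
    by (auto intro!: derivative_eq_intros simp: power2_eq_square field_simps)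
  moreover have "(poly (pderiv (Pn n)) (1/x) * (- 1 / x^2)) * exp (-1/x) + poly (Pn n) (1/x) * (exp (-1/x) * (1 / x^2))
      = poly (Pn (Suc n)) (1/x) * exp (-1/x)"
    by (simp add: algebra_simps power2_eq_square divide_inverse)
  ultimately show ?thesis by simp
qed

lemma Dflat_deriv: "(Dflat n has_real_derivative Dflat (Suc n) x) (at x)"
proof (cases "x > 0")
  case True
  have ev: "\<forall>\<^sub>F y in nhds x. poly (Pn n) (1/y) * exp (-1/y) = Dflat n y"
    using eventually_nhds_in_open[of "{0<..}" x] True
    by (auto elim!: eventually_mono simp: Dflat_def)
  show ?thesis
    using DERIV_cong_ev[OF refl ev refl] Dflat_pos_deriv[OF True, of n] True
    unfolding Dflat_def[of "Suc n"] by simp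
next
  case False
  show ?thesis
  proof (cases "x < 0")
    case True
    have ev: "\<forall>\<^sub>F y in nhds x. (\<lambda>_. 0) y = Dflat n y"
      using eventually_nhds_in_open[of "{..<0}" x] True
      by (auto elim!: eventually_mono simp: Dflat_def)
    show ?thesis
      using DERIV_cong_ev[OF refl ev refl] True DERIV_const[of 0 "at x"]
      by (simp add: Dflat_def[abs_def])
  next
    case False
    with \<open>\<not> x > 0\<close> have x0: "x = 0" by simp
    have "((\<lambda>h. (Dflat n h - Dflat n 0) / (h - 0)) \<longlongrightarrow> 0) (at 0)"
      unfolding filterlim_at_split
    proof
      show "((\<lambda>h. (Dflat n h - Dflat n 0) / (h - 0)) \<longlongrightarrow> 0) (at_left 0)"
        by (rule tendsto_eventually) (auto simp: eventually_at_filter Dflat_def)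
    next
      have lim: "((\<lambda>y. poly ([:0,1:] * Pn n) y * exp (-y)) \<longlongrightarrow> 0) at_top"
        by (rule poly_exp_lim)
      have "((\<lambda>y. (Dflat n (inverse y) - Dflat n 0) / (inverse y - 0)) \<longlongrightarrow> 0) at_top"
        apply (rule Lim_transform_eventually[OF lim])
        using eventually_gt_at_top[of "0::real"]
        by eventually_elim (simp add: Dflat_def field_simps)
      then show "((\<lambda>h. (Dflat n h - Dflat n 0) / (h - 0)) \<longlongrightarrow> 0) (at_right 0)"
        by (simp add: filterlim_at_right_to_top)
    qed
    then have "(Dflat n has_real_derivative 0) (at 0)"
      by (simp add: has_field_derivative_iff)
    then show ?thesis using x0 by (simp add: Dflat_def)
  qed
qed

lemma Dflat0: "Dflat 0 x = (if x > 0 then exp (-1/x) else 0)"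
  by (simp add: Dflat_def)

lemma Dflat_comp: "((\<lambda>x. Dflat n (c + s*x)) has_real_derivative Dflat (Suc n) (c + s*x) * s) (at x)"
proof -
  have "((\<lambda>x. c + s*x) has_real_derivative s) (at x)"
    by (auto intro!: derivative_eq_intros)
  from DERIV_chain2[where f="Dflat n" and g="\<lambda>x. c + s*x", OF Dflat_deriv this]
  show ?thesis .
qed

inductive_set Alg :: "(real \<Rightarrow> real) set" where
  g1: "(\<lambda>x. Dflat n (x - 1/2)) \<in> Alg"
| g2: "(\<lambda>x. (-1)^n * Dflat n (3/2 - x)) \<in> Alg"
| cst: "(\<lambda>x. c) \<in> Alg"
| inv: "(\<lambda>x. inverse (Dflat 0 (x - 1/2) + Dflat 0 (3/2 - x))) \<in> Alg"
| add: "f \<in> Alg \<Longrightarrow> g \<in> Alg \<Longrightarrow> (\<lambda>x. f x + g x) \<in> Alg"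
| mul: "f \<in> Alg \<Longrightarrow> g \<in> Alg \<Longrightarrow> (\<lambda>x. f x * g x) \<in> Alg"

lemma den_pos: "Dflat 0 (x - 1/2) + Dflat 0 (3/2 - x) > 0"
  by (cases "x > 1/2") (auto simp: Dflat0 add_pos_nonneg add_nonneg_pos)

lemma Alg_deriv: "f \<in> Alg \<Longrightarrow> \<exists>f'\<in>Alg. \<forall>x. (f has_real_derivative f' x) (at x)"
proof (induction rule: Alg.induct)
  case (g1 n)
  show ?case
  proof (intro bexI[OF _ Alg.g1[of "Suc n"]] allI)
    fix x :: real
    show "((\<lambda>x. Dflat n (x - 1/2)) has_real_derivative Dflat (Suc n) (x - 1/2)) (at x)"
      using Dflat_comp[of n "-1/2" 1 x] by simp
  qed
next
  case (g2 n)
  show ?case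
  proof (intro bexI[OF _ Alg.g2[of "Suc n"]] allI)
    fix x :: real
    have h: "((\<lambda>x. Dflat n (3/2 - x)) has_real_derivative Dflat (Suc n) (3/2 - x) * (-1)) (at x)"
      using Dflat_comp[of n "3/2" "-1" x] by simp
    show "((\<lambda>x. (-1)^n * Dflat n (3/2 - x)) has_real_derivative (-1)^Suc n * Dflat (Suc n) (3/2 - x)) (at x)"
      using DERIV_cmult[where c="(-1)^n", OF h] by simp
  qed
next
  case (cst c)
  show ?case by (intro bexI[OF _ Alg.cst[of 0]]) auto
next
  case inv
  define u' where "u' x = Dflat 1 (x - 1/2) + (-1)^1 * Dflat 1 (3/2 - x)" for x
  have u'A: "u' \<in> Alg" unfolding u'_def[abs_def] by (intro Alg.add Alg.g1 Alg.g2)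
  have du: "((\<lambda>x. Dflat 0 (x - 1/2) + Dflat 0 (3/2 - x)) has_real_derivative u' x) (at x)" for x
  proof -
    have "((\<lambda>x. Dflat 0 (x - 1/2)) has_real_derivative Dflat 1 (x - 1/2) * 1) (at x)"
      using Dflat_comp[of 0 "-1/2" 1 x] by simp
    moreover have "((\<lambda>x. Dflat 0 (3/2 - x)) has_real_derivative Dflat 1 (3/2 - x) * (-1)) (at x)"
      using Dflat_comp[of 0 "3/2" "-1" x] by simp
    ultimately show ?thesis unfolding u'_def using DERIV_add by fastforce
  qed
  have iA: "(\<lambda>x. inverse (Dflat 0 (x - 1/2) + Dflat 0 (3/2 - x))) \<in> Alg" by (rule Alg.inv)
  show ?case
  proof (intro bexI allI)
    fix x
    have "((\<lambda>x. inverse (Dflat 0 (x - 1/2) + Dflat 0 (3/2 - x))) has_real_derivative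
       - (u' x * inverse ((Dflat 0 (x - 1/2) + Dflat 0 (3/2 - x)) ^ Suc (Suc 0)))) (at x)"
      by (rule DERIV_inverse_fun[OF du]) (use den_pos[of x] in simp)
    then show "((\<lambda>x. inverse (Dflat 0 (x - 1/2) + Dflat 0 (3/2 - x))) has_real_derivative
      (\<lambda>x. (-1) * u' x * (inverse (Dflat 0 (x - 1/2) + Dflat 0 (3/2 - x)) * inverse (Dflat 0 (x - 1/2) + Dflat 0 (3/2 - x)))) x) (at x)"
      by (rule DERIV_cong) simp
  next
    show "(\<lambda>x. (-1) * u' x * (inverse (Dflat 0 (x - 1/2) + Dflat 0 (3/2 - x)) * inverse (Dflat 0 (x - 1/2) + Dflat 0 (3/2 - x)))) \<in> Alg"
      using Alg.mul[OF Alg.mul[OF Alg.cst[of "-1"] u'A] Alg.mul[OF iA iA]] by simp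
  qed
next
  case (add f g)
  then obtain f' g' where "f' \<in> Alg" "g' \<in> Alg" "\<forall>x. (f has_real_derivative f' x) (at x)"
    "\<forall>x. (g has_real_derivative g' x) (at x)" by blast
  then show ?case by (intro bexI[OF _ Alg.add[of f' g']]) (auto intro: DERIV_add)
next
  case (mul f g)
  then obtain f' g' where A: "f' \<in> Alg" "g' \<in> Alg" and d: "\<forall>x. (f has_real_derivative f' x) (at x)"
    "\<forall>x. (g has_real_derivative g' x) (at x)" by blast
  show ?case
  proof (intro bexI allI)
    fix x show "((\<lambda>x. f x * g x) has_real_derivative (\<lambda>x. f' x * g x + f x * g' x) x) (at x)"
      using DERIV_mult[OF spec[OF d(1)] spec[OF d(2)], of x] by (simp add: mult.commute)
  next
    show "(\<lambda>x. f' x * g x + f x * g' x) \<in> Alg"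
      by (intro Alg.add Alg.mul A mul.hyps)
  qed
qed

lemma Alg_smooth:
  assumes "f \<in> Alg"
  shows "\<exists>D. D 0 = f \<and> (\<forall>n. D n \<in> Alg) \<and> (\<forall>n x. (D n has_real_derivative D (Suc n) x) (at x))"
proof -
  define nxt where "nxt g = (SOME g'. g' \<in> Alg \<and> (\<forall>x. (g has_real_derivative g' x) (at x)))" for g
  have nxt: "nxt g \<in> Alg \<and> (\<forall>x. (g has_real_derivative nxt g x) (at x))" if "g \<in> Alg" for g
  proof -
    have ex: "\<exists>g'. g' \<in> Alg \<and> (\<forall>x. (g has_real_derivative g' x) (at x))"
      using Alg_deriv[OF that] by blast
    from someI_ex[OF ex] show ?thesis unfolding nxt_def .
  qed
  define D where "D n = (nxt ^^ n) f" for n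
  have DA: "D n \<in> Alg" for n
  proof (induction n)
    case 0 then show ?case using assms by (simp add: D_def)
  next
    case (Suc n) then show ?case using nxt[of "D n"] by (simp add: D_def)
  qed
  have DS: "D (Suc n) = nxt (D n)" for n by (simp add: D_def)
  show ?thesis
  proof (intro exI[of _ D] conjI allI)
    show "D 0 = f" by (simp add: D_def)
    show "D n \<in> Alg" for n by (rule DA)
    show "(D n has_real_derivative D (Suc n) x) (at x)" for n x
      using nxt[OF DA[of n]] unfolding DS by blast
  qed
qed


lemma tail_bound1:
  fixes u v :: real and g :: "nat \<Rightarrow> real"
  assumes g1: "\<And>k. k \<le> N \<Longrightarrow> \<bar>g k\<bar> \<le> 1"
    and g0: "\<And>k. k \<le> N \<Longrightarrow> g k \<noteq> 0 \<Longrightarrow> N \<le> 5 * k"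
  shows "\<bar>\<Sum>k\<le>N. real (N choose k) * u^k * v^(N-k) * g k\<bar> \<le> (32 * \<bar>u\<bar> + \<bar>v\<bar>)^N / 2^N"
proof -
  have "\<bar>\<Sum>k\<le>N. real (N choose k) * u^k * v^(N-k) * g k\<bar> \<le> (\<Sum>k\<le>N. \<bar>real (N choose k) * u^k * v^(N-k) * g k\<bar>)"
    by (rule sum_abs)
  also have "\<dots> \<le> (\<Sum>k\<le>N. real (N choose k) * (32 * \<bar>u\<bar>)^k * \<bar>v\<bar>^(N-k) / 2^N)"
  proof (rule sum_mono)
    fix k assume k: "k \<in> {..N}"
    show "\<bar>real (N choose k) * u^k * v^(N-k) * g k\<bar> \<le> real (N choose k) * (32 * \<bar>u\<bar>)^k * \<bar>v\<bar>^(N-k) / 2^N"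
    proof (cases "g k = 0")
      case True then show ?thesis by simp
    next
      case False
      then have "N \<le> 5 * k" using g0 k by auto
      then have "(2::real)^N \<le> 2^(5*k)" by (intro power_increasing) auto
      also have "\<dots> = 32^k" by (simp add: power_mult)
      finally have c: "1 \<le> (32::real)^k / 2^N" by simp
      have "\<bar>real (N choose k) * u^k * v^(N-k) * g k\<bar> = real (N choose k) * \<bar>u\<bar>^k * \<bar>v\<bar>^(N-k) * \<bar>g k\<bar>"
        by (simp add: abs_mult power_abs)
      also have "\<dots> \<le> real (N choose k) * \<bar>u\<bar>^k * \<bar>v\<bar>^(N-k) * 1"
        using g1 k by (intro mult_left_mono) auto
      also have "\<dots> \<le> real (N choose k) * \<bar>u\<bar>^k * \<bar>v\<bar>^(N-k) * (32^k / 2^N)"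
        using c by (intro mult_left_mono) auto
      also have "\<dots> = real (N choose k) * (32 * \<bar>u\<bar>)^k * \<bar>v\<bar>^(N-k) / 2^N"
        by (simp add: power_mult_distrib)
      finally show ?thesis .
    qed
  qed
  also have "\<dots> = (32 * \<bar>u\<bar> + \<bar>v\<bar>)^N / 2^N"
    by (simp add: binomial_ring sum_divide_distrib)
  finally show ?thesis .
qed

lemma tail_bound2:
  fixes u v :: real and g :: "nat \<Rightarrow> real"
  assumes g1: "\<And>k. k \<le> N \<Longrightarrow> \<bar>g k\<bar> \<le> 1"
    and g0: "\<And>k. k \<le> N \<Longrightarrow> g k \<noteq> 0 \<Longrightarrow> N \<le> 5 * (N - k)"
  shows "\<bar>\<Sum>k\<le>N. real (N choose k) * u^k * v^(N-k) * g k\<bar> \<le> (\<bar>u\<bar> + 32 * \<bar>v\<bar>)^N / 2^N"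
proof -
  have "\<bar>\<Sum>k\<le>N. real (N choose k) * u^k * v^(N-k) * g k\<bar> \<le> (\<Sum>k\<le>N. \<bar>real (N choose k) * u^k * v^(N-k) * g k\<bar>)"
    by (rule sum_abs)
  also have "\<dots> \<le> (\<Sum>k\<le>N. real (N choose k) * \<bar>u\<bar>^k * (32 * \<bar>v\<bar>)^(N-k) / 2^N)"
  proof (rule sum_mono)
    fix k assume k: "k \<in> {..N}"
    show "\<bar>real (N choose k) * u^k * v^(N-k) * g k\<bar> \<le> real (N choose k) * \<bar>u\<bar>^k * (32 * \<bar>v\<bar>)^(N-k) / 2^N"
    proof (cases "g k = 0")
      case True then show ?thesis by simp
    next
      case False
      then have "N \<le> 5 * (N-k)" using g0 k by auto
      then have "(2::real)^N \<le> 2^(5*(N-k))" by (intro power_increasing) auto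
      also have "\<dots> = 32^(N-k)" by (simp add: power_mult)
      finally have c: "1 \<le> (32::real)^(N-k) / 2^N" by simp
      have "\<bar>real (N choose k) * u^k * v^(N-k) * g k\<bar> = real (N choose k) * \<bar>u\<bar>^k * \<bar>v\<bar>^(N-k) * \<bar>g k\<bar>"
        by (simp add: abs_mult power_abs)
      also have "\<dots> \<le> real (N choose k) * \<bar>u\<bar>^k * \<bar>v\<bar>^(N-k) * 1"
        using g1 k by (intro mult_left_mono) auto
      also have "\<dots> \<le> real (N choose k) * \<bar>u\<bar>^k * \<bar>v\<bar>^(N-k) * (32^(N-k) / 2^N)"
        using c by (intro mult_left_mono) auto
      also have "\<dots> = real (N choose k) * \<bar>u\<bar>^k * (32 * \<bar>v\<bar>)^(N-k) / 2^N"
        by (simp add: power_mult_distrib)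
      finally show ?thesis .
    qed
  qed
  also have "\<dots> = (\<bar>u\<bar> + 32 * \<bar>v\<bar>)^N / 2^N"
    by (simp add: binomial_ring sum_divide_distrib)
  finally show ?thesis .
qed

lemma bern_var:
  fixes q e :: real and N :: nat
  assumes N: "N \<ge> 1"
  shows "(\<Sum>k\<le>N. Bernstein N k q * (2*q - 2*e - 2*real k*(1-e)/real N)^2)
       = 4*e^2*(1-q)^2 + 4*(1-e)^2*q*(1-q)/real N"
proof -
  define A where "A = 2*q - 2*e"
  define B where "B = - 2*(1-e)/real N"
  have sq: "(2*q - 2*e - 2*real k*(1-e)/real N)^2 = A^2 + (2*A*B + B^2) * real k + B^2 * (real k * (real k - 1))" for k
    unfolding A_def B_def power2_eq_square by (simp add: divide_inverse algebra_simps)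
  have "(\<Sum>k\<le>N. Bernstein N k q * (2*q - 2*e - 2*real k*(1-e)/real N)^2)
      = (\<Sum>k\<le>N. A^2 * Bernstein N k q + (2*A*B + B^2) * (real k * Bernstein N k q) + B^2 * (real k * (real k - 1) * Bernstein N k q))"
    by (rule sum.cong[OF refl]) (simp only: sq, simp add: algebra_simps)
  also have "\<dots> = A^2 * (\<Sum>k\<le>N. Bernstein N k q) + (2*A*B + B^2) * (\<Sum>k\<le>N. real k * Bernstein N k q)
        + B^2 * (\<Sum>k\<le>N. real k * (real k - 1) * Bernstein N k q)"
    by (simp only: sum.distrib sum_distrib_left)
  also have "\<dots> = A^2 + (2*A*B + B^2) * (real N * q) + B^2 * (real N * (real N - 1) * q^2)"
    by simp
  also have "\<dots> = 4*e^2*(1-q)^2 + 4*(1-e)^2*q*(1-q)/real N"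
    using N by (simp add: A_def B_def field_simps power2_eq_square)
  finally show ?thesis .
qed

lemma case1:
  fixes f :: "real \<Rightarrow> real" and N :: nat
  assumes lip: "\<And>x y. x \<in> {-1..3} \<Longrightarrow> y \<in> {-1..3} \<Longrightarrow> \<bar>f x - f y\<bar> \<le> L * \<bar>x - y\<bar>"
    and L: "L \<ge> 0" and N: "N \<ge> 1" and q: "0 \<le> q" "q \<le> 1" and e: "0 \<le> e" "e \<le> 1"
    and T: "T = a' + 1 - 2*q" "T \<in> {-1..3}"
    and X: "\<And>k. k \<le> N \<Longrightarrow> a' + (1 - 2*((real k + e*(real N - real k))/real N)) \<in> {-1..3}"
  shows "\<bar>(\<Sum>k\<le>N. Bernstein N k q * f (a' + (1 - 2*((real k + e*(real N - real k))/real N)))) - f T\<bar>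
          \<le> L * (1/sqrt (real N) + 2*e)"
proof -
  define x where "x k = a' + (1 - 2*((real k + e*(real N - real k))/real N))" for k
  define s where "s = 1/sqrt (real N) + 2*e"
  have s0: "s > 0" using N e by (simp add: s_def add_pos_nonneg)
  have xT: "x k - T = 2*q - 2*e - 2*real k*(1-e)/real N" for k
    using N by (simp add: x_def T field_simps)
  have Bn: "0 \<le> Bernstein N k q" for k using q by (rule Bernstein_nonneg)
  have "(\<Sum>k\<le>N. Bernstein N k q * (f (x k) - f T)) = (\<Sum>k\<le>N. Bernstein N k q * f (x k)) - (\<Sum>k\<le>N. Bernstein N k q * f T)"
    by (simp add: right_diff_distrib sum_subtractf)
  moreover have "(\<Sum>k\<le>N. Bernstein N k q * f T) = f T"
    by (simp add: sum_distrib_right[symmetric])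
  ultimately have "(\<Sum>k\<le>N. Bernstein N k q * f (x k)) - f T = (\<Sum>k\<le>N. Bernstein N k q * (f (x k) - f T))"
    by simp
  then have "\<bar>(\<Sum>k\<le>N. Bernstein N k q * f (x k)) - f T\<bar> = \<bar>\<Sum>k\<le>N. Bernstein N k q * (f (x k) - f T)\<bar>"
    by simp
  also have "\<dots> \<le> (\<Sum>k\<le>N. \<bar>Bernstein N k q * (f (x k) - f T)\<bar>)" by (rule sum_abs)
  also have "\<dots> \<le> (\<Sum>k\<le>N. Bernstein N k q * (L * ((s^2 + (x k - T)^2) / (2* s))))"
  proof (rule sum_mono)
    fix k assume k: "k \<in> {..N}"
    have "\<bar>x k - T\<bar> \<le> (s^2 + (x k - T)^2) / (2* s)"
    proof -
      have "0 \<le> (\<bar>x k - T\<bar> - s)^2" by simp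
      then have "2* s*\<bar>x k - T\<bar> \<le> s^2 + (x k - T)^2" by (simp add: power2_eq_square algebra_simps)
      then show ?thesis using s0 by (simp add: field_simps)
    qed
    moreover have "\<bar>f (x k) - f T\<bar> \<le> L * \<bar>x k - T\<bar>"
      using lip[of "x k" T] X[of k] k T by (auto simp: x_def)
    ultimately have fb: "\<bar>f (x k) - f T\<bar> \<le> L * ((s^2 + (x k - T)^2) / (2* s))"
      using L by (meson mult_left_mono order_trans)
    show "\<bar>Bernstein N k q * (f (x k) - f T)\<bar> \<le> Bernstein N k q * (L * ((s^2 + (x k - T)^2) / (2* s)))"
      using Bn[of k] mult_left_mono[OF fb Bn[of k]] by (simp add: abs_mult)
  qed
  also have "\<dots> = (\<Sum>k\<le>N. L / (2* s) * (s^2 * Bernstein N k q + Bernstein N k q * (x k - T)^2))"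
    by (rule sum.cong[OF refl]) (simp add: algebra_simps add_divide_distrib)
  also have "\<dots> = L / (2* s) * (s^2 * (\<Sum>k\<le>N. Bernstein N k q) + (\<Sum>k\<le>N. Bernstein N k q * (x k - T)^2))"
    by (simp only: sum_distrib_left[symmetric] sum.distrib)
  also have "\<dots> = L / (2* s) * (s^2 + (4*e^2*(1-q)^2 + 4*(1-e)^2*q*(1-q)/real N))"
    using bern_var[OF N, of q e] by (simp add: xT)
  also have "\<dots> \<le> L / (2* s) * (s^2 + s^2)"
  proof -
    have a: "4*e^2*(1-q)^2 \<le> 4*e^2" using q by (simp add: power_le_one mult_left_le)
    have "(1-e)^2*(q*(1-q)) \<le> 1 * (1/4)"
    proof (rule mult_mono)
      show "(1-e)^2 \<le> 1" using e by (intro power_le_one) auto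
      have "0 \<le> (q - 1/2)^2" by simp
      then show "q*(1-q) \<le> 1/4" by (simp add: power2_eq_square algebra_simps)
    qed (use q in auto)
    then have "4*(1-e)^2*q*(1-q) \<le> 1" by (simp add: algebra_simps)
    then have b: "4*(1-e)^2*q*(1-q)/real N \<le> 1/real N" using N by (intro divide_right_mono) auto
    have c: "4*e^2 + 1/real N \<le> s^2"
    proof -
      have r: "(1/sqrt (real N))^2 = 1/real N" by (simp add: power_divide)
      have "s^2 = (1/sqrt (real N))^2 + 2*(1/sqrt (real N))*(2*e) + (2*e)^2"
        unfolding s_def by (simp add: power2_sum)
      moreover have "0 \<le> 2*(1/sqrt (real N))*(2*e)" using e by simp
      ultimately show ?thesis using r by (simp add: power2_eq_square)
    qed
    show ?thesis using a b c L s0 by (intro mult_left_mono) auto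
  qed
  also have "\<dots> = L * s" using s0 by (simp add: field_simps power2_eq_square)
  finally show ?thesis by (simp add: x_def s_def)
qed

lemma main_est:
  fixes f :: "real \<Rightarrow> real" and N :: nat
  assumes lip: "\<And>x y. x \<in> {-1..3} \<Longrightarrow> y \<in> {-1..3} \<Longrightarrow> \<bar>f x - f y\<bar> \<le> L * \<bar>x - y\<bar>"
    and L: "L \<ge> 0"
    and f0: "\<And>x. x \<le> 1/2 \<Longrightarrow> f x = 0" and f1: "\<And>x. x \<ge> 3/2 \<Longrightarrow> f x = 1"
    and fb: "\<And>x. 0 \<le> f x \<and> f x \<le> 1"
    and N: "N \<ge> 1" and e: "0 \<le> e" "e \<le> 1/20"
    and a1: "a' - 1 > 0" "a' + 1 < 201/100" and a2: "a + a' > 0" "a + a' < 201/100"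
  shows "\<bar>(\<Sum>k\<le>N. Bernstein N k ((1-a)/2) * f (a' + (1 - 2*((real k + e*(real N - real k))/real N)))) - f (a+a')\<bar>
          \<le> L * (1/sqrt (real N) + 2*e) + 2*(3/5)^N"
proof -
  define q where "q = (1-a)/2"
  define x where "x k = a' + (1 - 2*((real k + e*(real N - real k))/real N))" for k
  have Npos: "real N > 0" using N by simp
  have xb: "a' - 1 \<le> x k \<and> x k \<le> a' + 1 - 2*real k/real N" if "k \<le> N" for k
  proof -
    have "0 \<le> e*(real N - real k)" using e that by simp
    moreover have "e*(real N - real k) \<le> real N - real k" using e that by (simp add: mult_left_le_one_le)
    ultimately have h1: "real k + e*(real N - real k) \<le> real N" and h2: "real k \<le> real k + e*(real N - real k)"
      by linarith+
    have r1: "(real k + e*(real N - real k))/real N \<le> 1" using h1 Npos by simp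
    have r2: "real k/real N \<le> (real k + e*(real N - real k))/real N" using h2 Npos by (intro divide_right_mono) auto
    have xe: "x k = a' + 1 - 2*((real k + e*(real N - real k))/real N)" by (simp add: x_def)
    have te: "2*real k/real N = 2*(real k/real N)" by simp
    show ?thesis using r1 r2 xe te by linarith
  qed
  have xs: "x k \<in> {-1..3}" if "k \<le> N" for k
  proof -
    have "0 \<le> 2*real k/real N" by simp
    then show ?thesis using xb[OF that] a1 unfolding atLeastAtMost_iff by linarith
  qed
  have nonneg: "0 \<le> L * (1/sqrt (real N) + 2*e)" using L e by simp
  have pw: "((6/5)::real)^N / 2^N = (3/5)^N" by (simp add: power_divide[symmetric])
  have Bexp: "Bernstein N k q = real (N choose k) * q^k * (1-q)^(N-k)" for k by (simp add: Bernstein_def)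
  consider "\<bar>a\<bar> \<le> 1" | "a > 1" | "a < -1" by linarith
  then show ?thesis
  proof cases
    case 1
    have "\<bar>(\<Sum>k\<le>N. Bernstein N k q * f (x k)) - f (a+a')\<bar> \<le> L * (1/sqrt (real N) + 2*e)"
      unfolding x_def
    proof (rule case1[OF lip L N _ _ e(1)])
      show "0 \<le> q" "q \<le> 1" using 1 by (auto simp: q_def)
      show "e \<le> 1" using e by simp
      show "a + a' = a' + 1 - 2*q" by (simp add: q_def field_simps)
      show "a + a' \<in> {-1..3}" using a2 by simp
      show "a' + (1 - 2*((real k + e*(real N - real k))/real N)) \<in> {-1..3}" if "k \<le> N" for k
        using xs[OF that] by (simp add: x_def)
    qed (auto intro: lip)
    moreover have "0 \<le> 2*(3/5::real)^N" by simp
    ultimately show ?thesis unfolding q_def x_def by linarith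
  next
    case 2
    have fT: "f (a+a') = 1" using 2 a1 by (intro f1) simp
    have "(\<Sum>k\<le>N. Bernstein N k q * f (x k)) - f (a+a') = (\<Sum>k\<le>N. Bernstein N k q * (f (x k) - 1))"
      using fT by (simp add: right_diff_distrib sum_subtractf)
    also have "\<dots> = (\<Sum>k\<le>N. real (N choose k) * q^k * (1-q)^(N-k) * (f (x k) - 1))"
      by (simp add: Bexp)
    finally have eq: "(\<Sum>k\<le>N. Bernstein N k q * f (x k)) - f (a+a') = \<dots>" .
    have "\<bar>\<Sum>k\<le>N. real (N choose k) * q^k * (1-q)^(N-k) * (f (x k) - 1)\<bar> \<le> (32 * \<bar>q\<bar> + \<bar>1-q\<bar>)^N / 2^N"
    proof (rule tail_bound1)
      show "\<bar>f (x k) - 1\<bar> \<le> 1" for k using fb[of "x k"] by auto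
      show "N \<le> 5 * k" if k: "k \<le> N" and ne: "f (x k) - 1 \<noteq> 0" for k
      proof (rule ccontr)
        assume "\<not> N \<le> 5 * k"
        then have "real k * 5 < real N" by linarith
        then have "2 * real k / real N < 2/5" using Npos by (simp add: field_simps)
        moreover have "e*(real N - real k) \<le> real N / 20"
        proof -
          have "e*(real N - real k) \<le> (1/20)*(real N - real k)" using e k by (intro mult_right_mono) auto
          then show ?thesis by simp
        qed
        ultimately have r1: "real k / real N < 1/5" and r2: "e*(real N - real k) / real N \<le> 1/20"
          using Npos by (simp_all add: field_simps)
        have "(real k + e*(real N - real k))/real N = real k/real N + e*(real N - real k)/real N"
          by (simp add: add_divide_distrib)
        then have "x k = a' + 1 - 2*(real k/real N) - 2*(e*(real N - real k)/real N)"
          by (simp add: x_def)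
        then have "x k \<ge> 3/2" using a1 r1 r2 by linarith
        then show False using ne f1 by simp
      qed
    qed
    also have "\<dots> \<le> (6/5)^N / 2^N"
    proof -
      have h1: "\<bar>q\<bar> = (a-1)/2" and h2: "\<bar>1-q\<bar> = (1+a)/2" using 2 by (auto simp: q_def abs_if field_simps)
      have "32 * ((a-1)/2) + (1+a)/2 \<le> (6/5::real)" using 2 a1 a2 by (simp add: field_simps)
      then have "32 * \<bar>q\<bar> + \<bar>1-q\<bar> \<le> 6/5" unfolding h1 h2 .
      then show ?thesis by (intro divide_right_mono power_mono) auto
    qed
    finally show ?thesis using eq nonneg pw unfolding q_def x_def by simp
  next
    case 3
    have fT: "f (a+a') = 0" using 3 a1 by (intro f0) simp
    have "(\<Sum>k\<le>N. Bernstein N k q * f (x k)) - f (a+a') = (\<Sum>k\<le>N. real (N choose k) * q^k * (1-q)^(N-k) * f (x k))"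
      using fT by (simp add: Bexp)
    moreover have "\<bar>\<Sum>k\<le>N. real (N choose k) * q^k * (1-q)^(N-k) * f (x k)\<bar> \<le> (\<bar>q\<bar> + 32 * \<bar>1-q\<bar>)^N / 2^N"
    proof (rule tail_bound2)
      show "\<bar>f (x k)\<bar> \<le> 1" for k using fb[of "x k"] by auto
      show "N \<le> 5 * (N - k)" if k: "k \<le> N" and ne: "f (x k) \<noteq> 0" for k
      proof (rule ccontr)
        assume "\<not> N \<le> 5 * (N - k)"
        then have "real k * 5 > 4 * real N" using k by linarith
        then have "2 * real k / real N > 8/5" using Npos by (simp add: field_simps)
        then have "x k \<le> 1/2" using xb[OF k] a1 by linarith
        then show False using ne f0 by simp
      qed
    qed
    moreover have "(\<bar>q\<bar> + 32 * \<bar>1-q\<bar>)^N / 2^N \<le> (6/5)^N / 2^N"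
    proof -
      have h1: "\<bar>q\<bar> = (1-a)/2" and h2: "\<bar>1-q\<bar> = -(1+a)/2" using 3 by (auto simp: q_def abs_if field_simps)
      have "(1-a)/2 + 32 * (-(1+a)/2) \<le> (6/5::real)" using 3 a1 a2 by (simp add: field_simps)
      then have "\<bar>q\<bar> + 32 * \<bar>1-q\<bar> \<le> 6/5" unfolding h1 h2 .
      then show ?thesis by (intro divide_right_mono power_mono) auto
    qed
    ultimately show ?thesis using nonneg pw unfolding q_def x_def by simp
  qed
qed


definition psir :: "real \<Rightarrow> real" where
  "psir x = Dflat 0 (x - 1/2) * inverse (Dflat 0 (x - 1/2) + Dflat 0 (3/2 - x))"

lemma psir_Alg: "psir \<in> Alg"
proof -
  have "(\<lambda>x. Dflat 0 (x - 1/2) * inverse (Dflat 0 (x - 1/2) + Dflat 0 (3/2 - x))) \<in> Alg"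
    by (intro Alg.mul Alg.g1 Alg.inv)
  then show ?thesis by (simp add: psir_def[abs_def])
qed

lemma psir0: "x \<le> 1/2 \<Longrightarrow> psir x = 0"
  by (simp add: psir_def Dflat0)

lemma psir1: "x \<ge> 3/2 \<Longrightarrow> psir x = 1"
  by (simp add: psir_def Dflat0)

lemma psir_pos: "x > 1/2 \<Longrightarrow> psir x > 0"
  using den_pos[of x] by (simp add: psir_def Dflat0)

lemma psir_bounds: "0 \<le> psir x \<and> psir x \<le> 1"
proof -
  have d: "Dflat 0 y \<ge> 0" for y by (simp add: Dflat0)
  have p: "Dflat 0 (x - 1/2) + Dflat 0 (3/2 - x) > 0" by (rule den_pos)
  have "Dflat 0 (x - 1/2) \<le> Dflat 0 (x - 1/2) + Dflat 0 (3/2 - x)" using d by simp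
  then show ?thesis using p d[of "x - 1/2"]
    by (simp add: psir_def divide_inverse[symmetric] divide_le_eq_1)
qed

lemma psir_smooth:
  "\<exists>D. D 0 = psir \<and> (\<forall>n x. (D n has_real_derivative D (Suc n) x) (at x))"
  using Alg_smooth[OF psir_Alg] by blast

lemma psir_lip:
  "\<exists>L\<ge>0. \<forall>x y. x \<in> {-1..3} \<longrightarrow> y \<in> {-1..3} \<longrightarrow> \<bar>psir x - psir y\<bar> \<le> L * \<bar>x - y\<bar>"
proof -
  obtain D where D0: "D 0 = psir" and dD': "\<forall>n x. (D n has_real_derivative D (Suc n) x) (at x)"
    using psir_smooth by blast
  have dD: "(D n has_real_derivative D (Suc n) x) (at x)" for n x using dD' by blast
  have "continuous_on {-1..3} (D 1)"
    by (rule continuous_at_imp_continuous_on) (use dD DERIV_isCont in blast)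
  then have "bounded (D 1 ` {-1..3})" by (intro compact_imp_bounded compact_continuous_image) auto
  then obtain B where B: "B > 0" "\<And>x. x \<in> {-1..3} \<Longrightarrow> norm (D 1 x) \<le> B"
    unfolding bounded_pos by auto
  show ?thesis
  proof (intro exI[of _ B] conjI allI impI)
    show "0 \<le> B" using B by simp
    fix x y :: real assume "x \<in> {-1..3}" "y \<in> {-1..3}"
    have "norm (psir x - psir y) \<le> B * norm (x - y)"
    proof (rule field_differentiable_bound[where S="{-1..3}" and f'="D 1"])
      show "convex {-1..(3::real)}" by simp
      show "(psir has_field_derivative D 1 z) (at z within {-1..3})" for z
        using dD[of 0 z] D0 by (simp add: has_field_derivative_at_within)
    qed (use B \<open>x \<in> _\<close> \<open>y \<in> _\<close> in auto)
    then show "\<bar>psir x - psir y\<bar> \<le> B * \<bar>x - y\<bar>" by simp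
  qed
qed

definition AA :: "real set" where "AA = {0<..<201/100}"

lemma AA_interval: "open_interval_gt2 AA"
  unfolding open_interval_gt2_def AA_def
proof (intro conjI)
  show "is_interval {0<..<201/100::real}" using is_interval_box[of 0 "201/100::real"] by simp
  show "\<exists>x\<in>{0<..<201/100}. \<exists>y\<in>{0<..<201/100}. y - x > (2::real)"
    by (rule bexI[of _ "1/1000"], rule bexI[of _ "2005/1000"]) auto
qed auto

lemma adm_AA:
  assumes "(a, a') \<in> adm_pairs AA"
  shows "a' - 1 > 0 \<and> a' + 1 < 201/100 \<and> a + a' > 0 \<and> a + a' < 201/100"
proof -
  have sub: "{a' - 1..a' + 1} \<subseteq> {0<..<201/100}" and T: "a + a' \<in> {0<..<201/100}"
    using assms unfolding adm_pairs_def AA_def by auto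
  have "a' - 1 \<in> {a' - 1..a' + 1}" "a' + 1 \<in> {a' - 1..a' + 1}" by auto
  then have "a' - 1 \<in> {0<..<201/100}" "a' + 1 \<in> {0<..<201/100}" using sub by blast+
  then show ?thesis using T by auto
qed

lemma S_eq:
  "S_eps e (\<lambda>x. complex_of_real (psir x)) N a a' =
    complex_of_real (\<Sum>k\<le>N. Bernstein N k ((1-a)/2) * psir (a' + (1 - 2*((real k + e N*(real N - real k))/real N))))"
  unfolding S_eps_def h_eps_def of_real_sum atLeast0AtMost
proof (rule sum.cong[OF refl])
  fix k assume "k \<in> {..N}"
  have h: "1 - (1 - a) / 2 = (1 + a) / (2::real)" by (simp add: diff_divide_distrib)
  show "complex_of_real (real (N choose k) * ((1 + a) / 2) ^ (N - k) * ((1 - a) / 2) ^ k) *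
         complex_of_real (psir (a' + (1 - 2 * ((real k + e N * (real N - real k)) / real N)))) =
         complex_of_real (Bernstein N k ((1 - a) / 2) * psir (a' + (1 - 2 * ((real k + e N * (real N - real k)) / real N))))"
    unfolding Bernstein_def h by (simp add: mult_ac)
qed

lemma key_bound:
  "\<exists>L\<ge>0. \<forall>e N a a'. (a, a') \<in> adm_pairs AA \<longrightarrow> N \<ge> 1 \<longrightarrow> 0 \<le> e N \<longrightarrow> e N \<le> 1/20 \<longrightarrow>
      norm (S_eps e (\<lambda>x. complex_of_real (psir x)) N a a' - complex_of_real (psir (a + a')))
        \<le> L * (1/sqrt (real N) + 2 * e N) + 2*(3/5)^N"
proof -
  obtain L where L: "L \<ge> 0" and lip': "\<forall>x y. x \<in> {-1..3} \<longrightarrow> y \<in> {-1..3} \<longrightarrow> \<bar>psir x - psir y\<bar> \<le> L * \<bar>x - y\<bar>"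
    using psir_lip by blast
  have lip: "\<bar>psir x - psir y\<bar> \<le> L * \<bar>x - y\<bar>" if "x \<in> {-1..3}" "y \<in> {-1..3}" for x y
    using lip' that by blast
  show ?thesis
  proof (intro exI[of _ L] conjI L allI impI)
    fix e :: "nat \<Rightarrow> real" and N a a'
    assume p: "(a, a') \<in> adm_pairs AA" and N: "N \<ge> 1" and e1: "0 \<le> e N" and e2: "e N \<le> 1/20"
    note e = e1 e2
    have "\<bar>(\<Sum>k\<le>N. Bernstein N k ((1-a)/2) * psir (a' + (1 - 2*((real k + e N*(real N - real k))/real N)))) - psir (a+a')\<bar>
          \<le> L * (1/sqrt (real N) + 2*e N) + 2*(3/5)^N"
      using adm_AA[OF p] by (intro main_est[OF lip L psir0 psir1 psir_bounds N e]) auto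
    then show "norm (S_eps e (\<lambda>x. complex_of_real (psir x)) N a a' - complex_of_real (psir (a + a')))
        \<le> L * (1/sqrt (real N) + 2 * e N) + 2*(3/5)^N"
      unfolding S_eq of_real_diff[symmetric] norm_of_real by simp
  qed
qed

lemma small_bound:
  assumes L: "L \<ge> 0" and d: "d > 0"
  shows "\<exists>\<eta>>0. \<eta> \<le> 1/20 \<and> (\<exists>N0\<ge>1. \<forall>N\<ge>N0. \<forall>t. 0 \<le> t \<and> t \<le> \<eta> \<longrightarrow> L * (1/sqrt (real N) + 2*t) + 2*(3/5)^N < d)"
proof -
  have "(\<lambda>N. L * sqrt (inverse (real N)) + 2*(3/5::real)^N) \<longlonglongrightarrow> L * sqrt 0 + 2 * 0"
    by (intro tendsto_intros lim_inverse_n) auto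
  then have "\<forall>\<^sub>F N in sequentially. L * sqrt (inverse (real N)) + 2*(3/5::real)^N < d/2"
    using d by (intro order_tendstoD) auto
  then obtain N1 where N1: "\<And>N. N \<ge> N1 \<Longrightarrow> L * sqrt (inverse (real N)) + 2*(3/5::real)^N < d/2"
    unfolding eventually_sequentially by blast
  define \<eta> where "\<eta> = min (1/20) (d / (4 * (L + 1)))"
  have \<eta>1: "\<eta> > 0" using d L by (simp add: \<eta>_def)
  have \<eta>2: "\<eta> \<le> 1/20" unfolding \<eta>_def by (rule min.cobounded1)
  note \<eta> = \<eta>1 \<eta>2
  have "2 * L * \<eta> < d/2"
  proof -
    have "2 * L * \<eta> \<le> 2 * L * (d / (4 * (L + 1)))" using L by (intro mult_left_mono) (auto simp: \<eta>_def)
    also have "\<dots> = (d/2) * (L / (L + 1))" using L by (simp add: field_simps)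
    also have "\<dots> < d/2" using L d by (simp add: field_simps)
    finally show ?thesis .
  qed
  show ?thesis
  proof (intro exI[of _ \<eta>] conjI \<eta> exI[of _ "max 1 N1"] allI impI)
    fix N t assume N: "max 1 N1 \<le> N" and t: "0 \<le> t \<and> t \<le> \<eta>"
    have "L * (1/sqrt (real N) + 2*t) = L * sqrt (inverse (real N)) + 2 * L * t"
      by (simp add: real_sqrt_inverse algebra_simps divide_inverse)
    also have "2 * L * t \<le> 2 * L * \<eta>" using t L by (intro mult_left_mono) auto
    then have "L * sqrt (inverse (real N)) + 2 * L * t + 2*(3/5)^N < d/2 + d/2"
      using N1[of N] N \<open>2 * L * \<eta> < d/2\<close> by linarith
    finally show "L * (1/sqrt (real N) + 2*t) + 2*(3/5)^N < d" by simp
  qed simp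
qed

lemma supershift: "regular_supershift AA (\<lambda>x. complex_of_real (psir x))"
proof -
  obtain L where L: "L \<ge> 0" and kb': "\<forall>e N a a'. (a, a') \<in> adm_pairs AA \<longrightarrow> N \<ge> 1 \<longrightarrow> 0 \<le> e N \<longrightarrow> e N \<le> 1/20 \<longrightarrow>
      norm (S_eps e (\<lambda>x. complex_of_real (psir x)) N a a' - complex_of_real (psir (a + a')))
        \<le> L * (1/sqrt (real N) + 2 * e N) + 2*(3/5)^N"
    using key_bound by blast
  have kb: "norm (S_eps e (\<lambda>x. complex_of_real (psir x)) N a a' - complex_of_real (psir (a + a'))) < d"
    if "(a, a') \<in> adm_pairs AA" "N \<ge> N0" "N0 \<ge> 1" "0 \<le> e N" "e N \<le> \<eta>" "\<eta> \<le> 1/20"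
       "\<forall>N\<ge>N0. \<forall>t. 0 \<le> t \<and> t \<le> \<eta> \<longrightarrow> L * (1/sqrt (real N) + 2*t) + 2*(3/5)^N < d"
     for e N a a' N0 \<eta> d
  proof -
    have "norm (S_eps e (\<lambda>x. complex_of_real (psir x)) N a a' - complex_of_real (psir (a + a')))
        \<le> L * (1/sqrt (real N) + 2 * e N) + 2*(3/5)^N"
      using kb' that by auto
    also have "\<dots> < d" using that by auto
    finally show ?thesis .
  qed
  obtain D where D0: "D 0 = psir" and dD': "\<forall>n x. (D n has_real_derivative D (Suc n) x) (at x)"
    using psir_smooth by blast
  have "isCont psir x" for x using dD' D0 DERIV_isCont by metis
  then have "continuous_on AA psir" by (intro continuous_at_imp_continuous_on) auto
  then have cont: "continuous_on AA (\<lambda>x. complex_of_real (psir x))" by simp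
  show ?thesis unfolding regular_supershift_def
  proof (intro conjI cont allI impI)
    fix e :: "nat \<Rightarrow> real" and K :: "(real \<times> real) set"
    assume adm: "adm_eps e" and K: "compact K \<and> K \<subseteq> adm_pairs AA"
    show "uniform_limit K (\<lambda>N (a, a'). S_eps e (\<lambda>x. complex_of_real (psir x)) N a a')
            (\<lambda>(a, a'). complex_of_real (psir (a + a'))) sequentially"
      unfolding uniform_limit_iff
    proof (intro allI impI)
      fix d :: real assume d: "d > 0"
      obtain \<eta> N0 where \<eta>: "\<eta> > 0" "\<eta> \<le> 1/20" and N0: "N0 \<ge> 1"
        and sm: "\<forall>N\<ge>N0. \<forall>t. 0 \<le> t \<and> t \<le> \<eta> \<longrightarrow> L * (1/sqrt (real N) + 2*t) + 2*(3/5)^N < d"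
        using small_bound[OF L d] by blast
      have "\<forall>\<^sub>F N in sequentially. e N < \<eta>"
        using adm \<eta> unfolding adm_eps_def by (intro order_tendstoD(2)) auto
      moreover have "\<forall>\<^sub>F N in sequentially. N \<ge> N0" by (rule eventually_ge_at_top)
      ultimately show "\<forall>\<^sub>F N in sequentially. \<forall>x\<in>K.
          dist ((\<lambda>N (a, a'). S_eps e (\<lambda>x. complex_of_real (psir x)) N a a') N x)
               ((\<lambda>(a, a'). complex_of_real (psir (a + a'))) x) < d"
      proof eventually_elim
        case (elim N)
        show ?case
        proof
          fix x assume "x \<in> K"
          then obtain a a' where x: "x = (a, a')" "(a, a') \<in> adm_pairs AA" using K by (cases x) auto
          have "norm (S_eps e (\<lambda>x. complex_of_real (psir x)) N a a' - complex_of_real (psir (a + a'))) < d"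
            using adm elim \<eta> N0 sm unfolding adm_eps_def by (intro kb[OF x(2)]) auto
          then show "dist ((\<lambda>N (a, a'). S_eps e (\<lambda>x. complex_of_real (psir x)) N a a') N x)
               ((\<lambda>(a, a'). complex_of_real (psir (a + a'))) x) < d"
            by (simp add: x dist_norm)
        qed
      qed
    qed
  next
    fix F :: "(nat \<Rightarrow> real) set" and K :: "(real \<times> real) set" and d :: real
    assume F: "(\<forall>e\<in>F. adm_eps e) \<and> (\<forall>\<delta>>0. \<forall>\<^sub>F N in sequentially. \<forall>e\<in>F. e N \<le> \<delta>)"
      and K: "compact K \<and> K \<subseteq> adm_pairs AA" and d: "d > 0"
    obtain \<eta> N0 where \<eta>: "\<eta> > 0" "\<eta> \<le> 1/20" and N0: "N0 \<ge> 1"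
      and sm: "\<forall>N\<ge>N0. \<forall>t. 0 \<le> t \<and> t \<le> \<eta> \<longrightarrow> L * (1/sqrt (real N) + 2*t) + 2*(3/5)^N < d"
      using small_bound[OF L d] by blast
    have "\<forall>\<^sub>F N in sequentially. \<forall>e\<in>F. e N \<le> \<eta>" using F \<eta> by blast
    moreover have "\<forall>\<^sub>F N in sequentially. N \<ge> N0" by (rule eventually_ge_at_top)
    ultimately show "\<forall>\<^sub>F N in sequentially. \<forall>e\<in>F. \<forall>(a, a')\<in>K.
        norm (S_eps e (\<lambda>x. complex_of_real (psir x)) N a a' - complex_of_real (psir (a + a'))) < d"
    proof eventually_elim
      case (elim N)
      show ?case
      proof (intro ballI)
        fix e x assume e: "e \<in> F" and x: "x \<in> K"
        obtain a a' where xa: "x = (a, a')" by (cases x)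
        have p: "(a, a') \<in> adm_pairs AA" using K x xa by auto
        have "norm (S_eps e (\<lambda>x. complex_of_real (psir x)) N a a' - complex_of_real (psir (a + a'))) < d"
          using F e elim \<eta> N0 sm unfolding adm_eps_def by (intro kb[OF p]) auto
        then show "case x of (a, a') \<Rightarrow> norm (S_eps e (\<lambda>x. complex_of_real (psir x)) N a a' - complex_of_real (psir (a + a'))) < d"
          by (simp add: xa)
      qed
    qed
  qed
qed

lemma smooth: "smooth_on_real AA (\<lambda>x. complex_of_real (psir x))"
proof -
  obtain D where D0: "D 0 = psir" and dD': "\<forall>n x. (D n has_real_derivative D (Suc n) x) (at x)"
    using psir_smooth by blast
  show ?thesis unfolding smooth_on_real_def
  proof (intro exI[of _ "\<lambda>n x. complex_of_real (D n x)"] conjI ballI allI)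
    show "complex_of_real (D 0 x) = complex_of_real (psir x)" for x using D0 by simp
    show "((\<lambda>x. complex_of_real (D n x)) has_vector_derivative complex_of_real (D (Suc n) x)) (at x)" for n x
      using dD' by (intro has_vector_derivative_of_real) blast
  qed
qed

lemma not_analytic: "\<not> real_analytic_on AA (\<lambda>x. complex_of_real (psir x))"
proof
  assume "real_analytic_on AA (\<lambda>x. complex_of_real (psir x))"
  moreover have "1/2 \<in> AA" by (simp add: AA_def)
  ultimately obtain r c where r: "r > 0" and ser: "\<forall>x. \<bar>x - 1/2\<bar> < r \<longrightarrow>
      x \<in> AA \<and> (\<lambda>n. c n * complex_of_real ((x - 1/2) ^ n)) sums complex_of_real (psir x)"
    unfolding real_analytic_on_def by blast
  have ser': "(\<lambda>n. c n * (complex_of_real t) ^ n) sums complex_of_real (psir (1/2 + t))" if "\<bar>t\<bar> < r" for t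
    using ser[rule_format, of "1/2 + t"] that by (simp add: of_real_power)
  define R where "R = 3*r/4"
  have R: "R > 0" "R < r" using r by (auto simp: R_def)
  have sR: "summable (\<lambda>n. c n * (complex_of_real R) ^ n)"
    using ser'[of R] R by (auto simp: sums_iff)
  define g where "g z = (\<Sum>n. c n * z ^ n)" for z
  have gs: "(\<lambda>n. c n * (w - 0) ^ n) sums g w" if "w \<in> ball 0 R" for w
  proof -
    have "norm w < norm (complex_of_real R)" using that R by auto
    from powser_inside[OF sR this] show ?thesis by (simp add: g_def summable_sums)
  qed
  have hol: "g holomorphic_on ball 0 R" by (rule power_series_holomorphic[OF gs])
  have greal: "g (complex_of_real t) = complex_of_real (psir (1/2 + t))" if "\<bar>t\<bar> < r" for t
    using sums_unique[OF ser'[OF that]] by (simp add: g_def)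
  define U where "U = complex_of_real ` {-(R/2)<..<0}"
  have "g (complex_of_real (R/2)) = 0"
  proof (rule analytic_continuation[OF hol open_ball connected_ball])
    show "U \<subseteq> ball 0 R" using R by (auto simp: U_def)
    show "0 \<in> ball 0 R" using R by simp
    show "complex_of_real (R/2) \<in> ball 0 R" using R by simp
    show "g z = 0" if "z \<in> U" for z
    proof -
      obtain t where t: "z = complex_of_real t" "-(R/2) < t" "t < 0" using \<open>z \<in> U\<close> by (auto simp: U_def)
      have "\<bar>t\<bar> < r" using t R by auto
      then show ?thesis using greal[of t] t psir0[of "1/2 + t"] by simp
    qed
    show "0 islimpt U" unfolding islimpt_approachable
    proof (intro allI impI)
      fix \<epsilon> :: real assume \<epsilon>: "\<epsilon> > 0"
      define t where "t = - min (\<epsilon>/2) (R/4)"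
      have t: "-(R/2) < t" "t < 0" "\<bar>t\<bar> < \<epsilon>" using \<epsilon> R by (auto simp: t_def)
      show "\<exists>x'\<in>U. x' \<noteq> 0 \<and> dist x' 0 < \<epsilon>"
        using t by (intro bexI[of _ "complex_of_real t"]) (auto simp: U_def)
    qed
  qed
  moreover have "g (complex_of_real (R/2)) = complex_of_real (psir (1/2 + R/2))"
    using R by (intro greal) auto
  moreover have "psir (1/2 + R/2) > 0" using R by (intro psir_pos) auto
  ultimately show False by simp
qed

theorem mainTheorem6:
  shows "\<exists>(A :: real set) (\<psi> :: real \<Rightarrow> complex).
           open_interval_gt2 A \<and> smooth_on_real A \<psi> \<and>
           regular_supershift A \<psi> \<and> \<not> real_analytic_on A \<psi>"
  using AA_interval smooth supershift not_analytic by blast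

end
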